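(* There exist $\alpha>0$, $\gamma\in(0,1]$, integers $m\ge1$, $k\ge2$, a set $\mathcal{X}$, a class $\mathcal{H}$ of functions $\mathcal{X}\to\{0,1\}$, $\bar{x}\in\mathcal{X}^k$, a panel $\bar{j}=\bar{j}^{\alpha,\gamma}_{j^1,\dots,j^m}$ and $\pi\in\Delta\mathcal{H}$ such that simultaneously (1) $\mathbb{E}_{h\sim\pi}[Unfair^{\alpha,\gamma}(h,\bar{x},\bar{j})]=1$, and (2) $Unfair^{\alpha,\gamma}(\pi,\bar{x},\bar{j})=0$.
   Context: $\Delta\mathcal{H}$ is the set of distributions over $\mathcal{H}$, $\pi(x):=\Pr_{h\sim\pi}[h(x)=1]$, and a hypothesis $h$ is identified with the point mass on $h$. An auditor $j$ has $d^j:\mathcal{X}^2\to[0,1]$ (nonnegative, symmetric); $\pi$ has an $\alpha$-violation on $(x,x')$ w.r.t. $j$ if $\pi(x)-\pi(x')>d^j(x,x')+\alpha$. The panel $\bar{j}^{\alpha,\gamma}_{j^1,\dots,j^m}$ maps $(\pi,\bar{x})$, $\bar{x}\in\mathcal{X}^k$, to some pair $(\bar{x}^s,\bar{x}^l)$ with $s\ne l$ on which at least $\lceil\gamma m\rceil$ of the auditors detect an $\alpha$-violation of $\pi$, if such a pair exists, and to $(v,v)$ for a fixed default $v\in\mathcal{X}$ otherwise. $Unfair^{\alpha,\gamma}(\pi,\bar{x},\bar{j})=1$ if the panel outputs a pair with $s\ne l$, and $0$ otherwise. *)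

theory Defs
  imports "HOL-Probability.Probability"
begin

text \<open>Hypotheses are functions h :: 'a => bool (h x = True means h(x) = 1).
  A randomized classifier pi is a pmf over hypotheses; a hypothesis h is the point mass return_pmf h.\<close>

definition pval :: "('a \<Rightarrow> bool) pmf \<Rightarrow> 'a \<Rightarrow> real" where
  "pval \<pi> x = measure_pmf.prob \<pi> {h. h x}"

definition auditor :: "'a set \<Rightarrow> ('a \<Rightarrow> 'a \<Rightarrow> real) \<Rightarrow> bool" where
  "auditor X d \<longleftrightarrow> (\<forall>x\<in>X. \<forall>y\<in>X. 0 \<le> d x y \<and> d x y \<le> 1 \<and> d x y = d y x)"

definition violation :: "real \<Rightarrow> ('a \<Rightarrow> 'a \<Rightarrow> real) \<Rightarrow> ('a \<Rightarrow> bool) pmf \<Rightarrow> 'a \<Rightarrow> 'a \<Rightarrow> bool" where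
  "violation \<alpha> d \<pi> x x' \<longleftrightarrow> pval \<pi> x - pval \<pi> x' > d x x' + \<alpha>"

definition panel_violating ::
  "real \<Rightarrow> real \<Rightarrow> ('a \<Rightarrow> 'a \<Rightarrow> real) list \<Rightarrow> ('a \<Rightarrow> bool) pmf \<Rightarrow> 'a list \<Rightarrow> nat \<Rightarrow> nat \<Rightarrow> bool" where
  "panel_violating \<alpha> \<gamma> ds \<pi> xs s l \<longleftrightarrow>
     s < length xs \<and> l < length xs \<and> s \<noteq> l \<and>
     int (card {i. i < length ds \<and> violation \<alpha> (ds ! i) \<pi> (xs ! s) (xs ! l)})
        \<ge> \<lceil>\<gamma> * real (length ds)\<rceil>"

text \<open>J is a panel for auditors ds with parameters alpha, gamma: it outputs (indices of)
  a pair (s,l) with s ~= l on which enough auditors detect a violation, if one exists,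
  and otherwise the default, a diagonal pair (s = l) standing for (v,v).\<close>
definition is_panel ::
  "real \<Rightarrow> real \<Rightarrow> ('a \<Rightarrow> 'a \<Rightarrow> real) list \<Rightarrow> (('a \<Rightarrow> bool) pmf \<Rightarrow> 'a list \<Rightarrow> nat \<times> nat) \<Rightarrow> bool" where
  "is_panel \<alpha> \<gamma> ds J \<longleftrightarrow>
     (\<forall>\<pi> xs. if (\<exists>s l. panel_violating \<alpha> \<gamma> ds \<pi> xs s l)
             then panel_violating \<alpha> \<gamma> ds \<pi> xs (fst (J \<pi> xs)) (snd (J \<pi> xs))
             else fst (J \<pi> xs) = snd (J \<pi> xs))"

definition Unfair :: "(('a \<Rightarrow> bool) pmf \<Rightarrow> 'a list \<Rightarrow> nat \<times> nat) \<Rightarrow> ('a \<Rightarrow> bool) pmf \<Rightarrow> 'a list \<Rightarrow> real" where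
  "Unfair J \<pi> xs = (if fst (J \<pi> xs) \<noteq> snd (J \<pi> xs) then 1 else 0)"

end

theory Submission
  imports Defs
begin

definition Jc :: "real \<Rightarrow> real \<Rightarrow> (nat \<Rightarrow> nat \<Rightarrow> real) list \<Rightarrow> (nat \<Rightarrow> bool) pmf \<Rightarrow> nat list \<Rightarrow> nat \<times> nat" where
  "Jc a g ds \<pi> xs = (if \<exists>s l. panel_violating a g ds \<pi> xs s l
      then (SOME p. panel_violating a g ds \<pi> xs (fst p) (snd p)) else (0,0))"

lemma Jc_panel: "is_panel a g ds (Jc a g ds)"
  unfolding is_panel_def
proof (intro allI)
  fix \<pi> xs
  show "if \<exists>s l. panel_violating a g ds \<pi> xs s l
             then panel_violating a g ds \<pi> xs (fst (Jc a g ds \<pi> xs)) (snd (Jc a g ds \<pi> xs))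
             else fst (Jc a g ds \<pi> xs) = snd (Jc a g ds \<pi> xs)"
  proof (cases "\<exists>s l. panel_violating a g ds \<pi> xs s l")
    case True
    then have "\<exists>p. panel_violating a g ds \<pi> xs (fst p) (snd p)" by auto
    from someI_ex[OF this] True show ?thesis by (simp add: Jc_def)
  next
    case False
    then show ?thesis by (simp add: Jc_def)
  qed
qed

definition h1 :: "nat \<Rightarrow> bool" where "h1 = (\<lambda>x. x = 0)"
definition h2 :: "nat \<Rightarrow> bool" where "h2 = (\<lambda>x. x = 1)"

lemma h12: "h1 \<noteq> h2" unfolding h1_def h2_def by (metis zero_neq_one)

abbreviation "DS \<equiv> [(\<lambda>x y. 0::real)]"
abbreviation "JJ \<equiv> Jc (1/2) 1 DS"

lemma unf_h:
  assumes "h = h1 \<or> h = h2"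
  shows "Unfair JJ (return_pmf h) [0,1] = 1"
proof -
  have "\<exists>s l. panel_violating (1/2) 1 DS (return_pmf h) [0,1] s l"
  proof (cases "h = h1")
    case True
    have "{i::nat. i < 1 \<and> violation (1/2) (DS ! i) (return_pmf h) 0 1} = {0}"
      using True by (auto simp: violation_def pval_def h1_def)
    then have "panel_violating (1/2) 1 DS (return_pmf h) [0,1] 0 1"
      by (simp add: panel_violating_def)
    then show ?thesis by blast
  next
    case False
    then have h: "h = h2" using assms by auto
    have "{i::nat. i < 1 \<and> violation (1/2) (DS ! i) (return_pmf h) 1 0} = {0}"
      using h by (auto simp: violation_def pval_def h2_def)
    then have "panel_violating (1/2) 1 DS (return_pmf h) [0,1] 1 0"
      by (simp add: panel_violating_def)
    then show ?thesis by blast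
  qed
  then have "panel_violating (1/2) 1 DS (return_pmf h) [0,1] (fst (JJ (return_pmf h) [0,1])) (snd (JJ (return_pmf h) [0,1]))"
    using Jc_panel[of "1/2" 1 DS] unfolding is_panel_def by metis
  then show ?thesis by (simp add: Unfair_def panel_violating_def)
qed

abbreviation "PI \<equiv> pmf_of_set {h1, h2}"

lemma pv_PI: "x \<in> {0,1} \<Longrightarrow> pval PI x = 1/2"
proof -
  assume x: "x \<in> {0,1}"
  have "{h1,h2} \<inter> {h. h x} = (if x = 0 then {h1} else {h2})"
    using x h12 by (auto simp: h1_def h2_def)
  then show ?thesis using h12 unfolding pval_def
    by (subst measure_pmf_of_set) auto
qed

lemma unf_PI: "Unfair JJ PI [0,1] = 0"
proof -
  have "\<not> panel_violating (1/2) 1 DS PI [0,1] s l" for s l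
  proof
    assume a: "panel_violating (1/2) 1 DS PI [0,1] s l"
    then have sl: "s < 2" "l < 2" by (auto simp: panel_violating_def)
    have "[0::nat,1] ! s \<in> {0,1}" "[0::nat,1] ! l \<in> {0,1}" using sl
      by (auto simp: less_2_cases_iff nth_Cons split: nat.splits)
    then have "{i::nat. i < 1 \<and> violation (1/2) (DS ! i) PI ([0,1] ! s) ([0,1] ! l)} = {}"
      by (auto simp: violation_def pv_PI)
    then have c0: "card {i::nat. i < 1 \<and> violation (1/2) (DS ! i) PI ([0,1] ! s) ([0,1] ! l)} = 0"
      by (simp only: card.empty)
    moreover have "int (card {i::nat. i < 1 \<and> violation (1/2) (DS ! i) PI ([0,1] ! s) ([0,1] ! l)}) \<ge> 1"
      using a by (simp add: panel_violating_def)
    ultimately show False by linarith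
  qed
  then have "fst (JJ PI [0,1]) = snd (JJ PI [0,1])"
    using Jc_panel[of "1/2" 1 DS] unfolding is_panel_def by metis
  then show ?thesis by (simp add: Unfair_def)
qed

lemma exp_PI: "measure_pmf.expectation PI (\<lambda>h. Unfair JJ (return_pmf h) [0,1]) = 1"
  using h12 unf_h[of h1] unf_h[of h2] by (subst integral_pmf_of_set) auto

theorem lemma5:
  shows "\<exists>(\<alpha>::real) (\<gamma>::real) (m::nat) (k::nat) (X::nat set) (H::(nat \<Rightarrow> bool) set)
            (xs::nat list) (ds::(nat \<Rightarrow> nat \<Rightarrow> real) list)
            (J::(nat \<Rightarrow> bool) pmf \<Rightarrow> nat list \<Rightarrow> nat \<times> nat) (\<pi>::(nat \<Rightarrow> bool) pmf).
     \<alpha> > 0 \<and> 0 < \<gamma> \<and> \<gamma> \<le> 1 \<and> m \<ge> 1 \<and> k \<ge> 2 \<and>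
     length xs = k \<and> set xs \<subseteq> X \<and>
     length ds = m \<and> (\<forall>d\<in>set ds. auditor X d) \<and>
     is_panel \<alpha> \<gamma> ds J \<and>
     set_pmf \<pi> \<subseteq> H \<and>
     measure_pmf.expectation \<pi> (\<lambda>h. Unfair J (return_pmf h) xs) = 1 \<and>
     Unfair J \<pi> xs = 0"
  apply (rule exI[of _ "1/2"], rule exI[of _ 1], rule exI[of _ 1], rule exI[of _ 2],
         rule exI[of _ UNIV], rule exI[of _ UNIV], rule exI[of _ "[0,1]"], rule exI[of _ DS],
         rule exI[of _ JJ], rule exI[of _ PI])
  using Jc_panel[of "1/2" 1 DS] exp_PI unf_PI by (auto simp: auditor_def)

end
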